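(* For any instance, any real number $t\ge1$, any $t$-cohesive group $N^*$, and any allocation $R'$ selected by Generalized PAV, the average satisfaction of $N^*$ with respect to $R'$ is strictly greater than $t-1$.
   Context: Model: There is a set of agents $N=\{1,\dots,n\}$. The resource $R$ consists of a cake $C=[0,c]$ for a real $c\ge 0$ and a set of indivisible goods $G=\{g_1,\dots,g_m\}$ for an integer $m\ge 0$, with $\max(c,m)>0$. A piece of cake is a union of finitely many disjoint closed subintervals of $C$; its length $\ell(\cdot)$ is the sum of the lengths of its intervals. A bundle $R'=(C',G')$ consists of a piece of cake $C'\subseteq C$ and a set $G'\subseteq G$; its size is $s(R')=\ell(C')+|G'|$. Each agent $i$ approves a bundle $R_i=(C_i,G_i)$, and her utility for a bundle $R'$ is $u_i(R')=\ell(C_i\cap C')+|G_i\cap G'|$. A parameter $\alpha\in(0,c+m]$ is given; an allocation is a bundle $A$ with $s(A)\le\alpha$. For a real $t>0$, $N^*\subseteq N$ is $t$-cohesive if $|N^*|\ge t n/\alpha$ and $s(\bigcap_{i\in N^*}R_i)\ge t$. Generalized harmonic numbers: $H_x\coloneqq\sum_{k=1}^\infty\frac{x}{k(x+k)}$ for real $x\ge0$. Generalized PAV selects an allocation $R'$ with $s(R')\le\alpha$ maximizing $\sum_{i\in N}H_{u_i(R')}$. The average satisfaction of a group $N'\subseteq N$ with respect to $A$ is $\frac1{|N'|}\sum_{i\in N'}u_i(A)$. *)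

theory Defs
  imports "HOL-Analysis.Analysis"
begin

text \<open>A piece of the cake [0,c]: a finite union of closed subintervals of [0,c].
  (Any finite union of closed intervals is a finite union of disjoint closed intervals.)\<close>
definition is_piece :: "real \<Rightarrow> real set \<Rightarrow> bool" where
  "is_piece c P \<longleftrightarrow> P \<subseteq> {0..c} \<and>
     (\<exists>I :: (real \<times> real) set. finite I \<and> (\<forall>(a,b)\<in>I. a \<le> b) \<and>
        P = (\<Union>(a,b)\<in>I. {a..b}))"

definition cake_len :: "real set \<Rightarrow> real" where
  "cake_len P = measure lborel P"

definition is_bundle :: "real \<Rightarrow> 'g set \<Rightarrow> real set \<times> 'g set \<Rightarrow> bool" where
  "is_bundle c G B \<longleftrightarrow> is_piece c (fst B) \<and> snd B \<subseteq> G"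

definition bsize :: "real set \<times> 'g set \<Rightarrow> real" where
  "bsize B = cake_len (fst B) + real (card (snd B))"

definition util :: "real set \<times> 'g set \<Rightarrow> real set \<times> 'g set \<Rightarrow> real" where
  "util Ri B = cake_len (fst Ri \<inter> fst B) + real (card (snd Ri \<inter> snd B))"

definition is_allocation :: "real \<Rightarrow> 'g set \<Rightarrow> real \<Rightarrow> real set \<times> 'g set \<Rightarrow> bool" where
  "is_allocation c G \<alpha> A \<longleftrightarrow> is_bundle c G A \<and> bsize A \<le> \<alpha>"

definition genH :: "real \<Rightarrow> real" where
  "genH x = (\<Sum>k. x / (real (Suc k) * (x + real (Suc k))))"

definition pav_score :: "'a set \<Rightarrow> ('a \<Rightarrow> real set \<times> 'g set) \<Rightarrow> real set \<times> 'g set \<Rightarrow> real" where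
  "pav_score N R A = (\<Sum>i\<in>N. genH (util (R i) A))"

definition is_gpav ::
  "real \<Rightarrow> 'g set \<Rightarrow> 'a set \<Rightarrow> ('a \<Rightarrow> real set \<times> 'g set) \<Rightarrow> real \<Rightarrow> real set \<times> 'g set \<Rightarrow> bool" where
  "is_gpav c G N R \<alpha> A \<longleftrightarrow> is_allocation c G \<alpha> A \<and>
     (\<forall>B. is_allocation c G \<alpha> B \<longrightarrow> pav_score N R B \<le> pav_score N R A)"

definition common_bundle :: "'a set \<Rightarrow> ('a \<Rightarrow> real set \<times> 'g set) \<Rightarrow> real set \<times> 'g set" where
  "common_bundle S R = ((\<Inter>i\<in>S. fst (R i)), (\<Inter>i\<in>S. snd (R i)))"

definition cohesive :: "'a set \<Rightarrow> ('a \<Rightarrow> real set \<times> 'g set) \<Rightarrow> real \<Rightarrow> real \<Rightarrow> 'a set \<Rightarrow> bool" where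
  "cohesive N R \<alpha> t S \<longleftrightarrow> S \<subseteq> N \<and> real (card S) \<ge> t * real (card N) / \<alpha> \<and>
     bsize (common_bundle S R) \<ge> t"

definition avg_sat :: "'a set \<Rightarrow> ('a \<Rightarrow> real set \<times> 'g set) \<Rightarrow> real set \<times> 'g set \<Rightarrow> real" where
  "avg_sat S R A = (\<Sum>i\<in>S. util (R i) A) / real (card S)"

end

theory Submission
  imports Defs
begin


lemma tele_sums:
  fixes a :: real assumes "a > 0"
  shows "(\<lambda>k. 1 / ((a + real k) * (a + real k + 1))) sums (1 / a)"
proof -
  have lim: "(\<lambda>n. 1 / (a + real n)) \<longlonglongrightarrow> 0"
  proof -
    have "(\<lambda>n. 1 / (a + real n)) = (\<lambda>n. inverse (a + real n))" by (simp add: divide_inverse)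
    moreover have "filterlim (\<lambda>n. a + real n) at_top sequentially"
      by (intro filterlim_tendsto_add_at_top[OF tendsto_const] filterlim_real_sequentially)
    ultimately show ?thesis using tendsto_inverse_0_at_top by metis
  qed
  have "(\<lambda>n. 1 / (a + real n) - 1 / (a + real (Suc n))) sums (1 / (a + real 0) - 0)"
    by (rule telescope_sums'[OF lim])
  moreover have "\<And>n. 1 / (a + real n) - 1 / (a + real (Suc n)) = 1 / ((a + real n) * (a + real n + 1))"
    using assms by (simp add: field_simps)
  ultimately show ?thesis by simp
qed

definition hf :: "real \<Rightarrow> nat \<Rightarrow> real" where
  "hf a k = a / (real (Suc k) * (a + real (Suc k)))"

lemma hf_summable: assumes "a \<ge> 0" shows "summable (hf a)"
proof (rule summable_comparison_test'[where g = "\<lambda>k. 2 * a * (1 / ((1 + real k) * (1 + real k + 1)))"])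
  show "summable (\<lambda>k. 2 * a * (1 / ((1 + real k) * (1 + real k + 1))))"
    using tele_sums[of 1] by (intro summable_mult) (simp add: sums_iff)
  fix n :: nat
  have "hf a n \<ge> 0" using assms by (simp add: hf_def)
  moreover have "hf a n \<le> 2 * a * (1 / ((1 + real n) * (1 + real n + 1)))"
  proof -
    have "hf a n = a / ((1 + real n) * (a + 1 + real n))" by (simp add: hf_def add_ac)
    also have "\<dots> \<le> a / ((1 + real n) * (1 + real n))"
      using assms by (intro divide_left_mono mult_left_mono) auto
    also have "\<dots> = (2 * a) / (2 * ((1 + real n) * (1 + real n)))" by simp
    also have "\<dots> \<le> (2 * a) / ((1 + real n) * (1 + real n + 1))"
      using assms by (intro divide_left_mono mult_pos_pos) (auto simp: algebra_simps)
    also have "\<dots> = 2 * a * (1 / ((1 + real n) * (1 + real n + 1)))" by simp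
    finally show ?thesis .
  qed
  ultimately show "norm (hf a n) \<le> 2 * a * (1 / ((1 + real n) * (1 + real n + 1)))" by simp
qed

lemma genH_hf: "genH a = suminf (hf a)"
  unfolding genH_def hf_def[abs_def] ..

lemma hf_alt: assumes "a \<ge> 0" shows "hf a k = 1 / real (Suc k) - 1 / (a + real (Suc k))"
proof -
  have "a + real (Suc k) > 0" "real (Suc k) > 0" using assms by auto
  thus ?thesis unfolding hf_def by (simp add: field_simps)
qed

lemma genH_diff:
  assumes "a \<ge> 0" "b \<ge> 0"
  shows "(\<lambda>k. (a - b) / ((a + real (Suc k)) * (b + real (Suc k)))) sums (genH a - genH b)"
proof -
  have "(\<lambda>k. hf a k - hf b k) sums (genH a - genH b)"
    unfolding genH_hf using hf_summable[OF assms(1)] hf_summable[OF assms(2)]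
    by (intro sums_diff) (auto simp: summable_sums)
  moreover have "hf a k - hf b k = (a - b) / ((a + real (Suc k)) * (b + real (Suc k)))" for k
  proof -
    define s where "s = real (Suc k)"
    have p: "a + s > 0" "b + s > 0" using assms by (auto simp: s_def)
    have "1 / (b + s) - 1 / (a + s) = (a - b) / ((a + s) * (b + s))"
      using p by (simp add: field_simps)
    thus ?thesis unfolding hf_alt[OF assms(1)] hf_alt[OF assms(2)] s_def by simp
  qed
  ultimately show ?thesis by simp
qed

lemma genH_mono: assumes "0 \<le> a" "a \<le> b" shows "genH a \<le> genH b"
proof -
  have "0 \<le> genH b - genH a"
  proof (rule sums_le[where f="\<lambda>_. 0" and g="\<lambda>k. (b - a) / ((b + real (Suc k)) * (a + real (Suc k)))"])
    show "(\<lambda>k. (b - a) / ((b + real (Suc k)) * (a + real (Suc k)))) sums (genH b - genH a)"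
      using genH_diff[of b a] assms by simp
    show "(\<lambda>_. 0::real) sums 0" by (rule sums_zero)
    fix k
    have "0 < (b + real (Suc k)) * (a + real (Suc k))" using assms by (intro mult_pos_pos) auto
    thus "0 \<le> (b - a) / ((b + real (Suc k)) * (a + real (Suc k)))" using assms by simp
  qed
  thus ?thesis by simp
qed

lemma genH_gain:
  assumes "u \<ge> 0" "0 \<le> x" "x \<le> 1"
  shows "genH (u + 1 - x) - genH u \<ge> (1 - x) / (u + 1)"
proof -
  have s1: "(\<lambda>k. (1 - x) * (1 / ((u + 1 + real k) * (u + 1 + real k + 1)))) sums ((1 - x) * (1 / (u + 1)))"
    using tele_sums[of "u+1"] assms by (intro sums_mult) auto
  have s2: "(\<lambda>k. ((u + 1 - x) - u) / (((u + 1 - x) + real (Suc k)) * (u + real (Suc k)))) sums (genH (u + 1 - x) - genH u)"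
    using assms by (intro genH_diff) auto
  have "(1 - x) * (1 / (u + 1)) \<le> genH (u + 1 - x) - genH u"
  proof (rule sums_le[OF _ s1 s2])
    fix k
    have le: "(u + 1 - x + real (Suc k)) * (u + real (Suc k)) \<le> (u + 1 + real k + 1) * (u + 1 + real k)"
      using assms by (intro mult_mono) auto
    have "(1 - x) / ((u + 1 + real k + 1) * (u + 1 + real k)) \<le> (1 - x) / ((u + 1 - x + real (Suc k)) * (u + real (Suc k)))"
      using assms by (intro divide_left_mono[OF le] mult_pos_pos) auto
    moreover have "(u + 1 + real k + 1) * (u + 1 + real k) = (u + 1 + real k) * (u + 1 + real k + 1)"
      by (rule mult.commute)
    moreover have "(u + 1 - x) - u = 1 - x" by simp
    ultimately show "(1 - x) * (1 / ((u + 1 + real k) * (u + 1 + real k + 1))) \<le> ((u + 1 - x) - u) / (((u + 1 - x) + real (Suc k)) * (u + real (Suc k)))"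
      by (metis times_divide_eq_right mult_1_right)
  qed
  thus ?thesis by (metis times_divide_eq_right mult_1_right)
qed

lemma genH_loss:
  assumes "0 \<le> x" "x \<le> 1" "x \<le> u"
  shows "genH u - genH (u - x) \<le> x / u"
proof (cases "u = 0")
  case True thus ?thesis using assms by simp
next
  case False
  hence up: "u > 0" using assms by simp
  have s1: "(\<lambda>k. x * (1 / ((u + real k) * (u + real k + 1)))) sums (x * (1 / u))"
    using tele_sums[OF up] by (intro sums_mult)
  have s2: "(\<lambda>k. (u - (u - x)) / ((u + real (Suc k)) * ((u - x) + real (Suc k)))) sums (genH u - genH (u - x))"
    using assms by (intro genH_diff) auto
  have "genH u - genH (u - x) \<le> x * (1 / u)"
  proof (rule sums_le[OF _ s2 s1])
    fix k
    have "x / ((u + real (Suc k)) * ((u - x) + real (Suc k))) \<le> x / ((u + real k + 1) * (u + real k))"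
    proof -
      have le: "(u + real k + 1) * (u + real k) \<le> (u + real (Suc k)) * ((u - x) + real (Suc k))"
        using assms up by (intro mult_mono) auto
      show ?thesis using assms up by (intro divide_left_mono[OF le] mult_pos_pos) auto
    qed
    moreover have "(u + real k + 1) * (u + real k) = (u + real k) * (u + real k + 1)"
      by (rule mult.commute)
    moreover have "u - (u - x) = x" by simp
    ultimately show "(u - (u - x)) / ((u + real (Suc k)) * ((u - x) + real (Suc k))) \<le> x * (1 / ((u + real k) * (u + real k + 1)))"
      by (metis times_divide_eq_right mult_1_right)
  qed
  thus ?thesis by (metis times_divide_eq_right mult_1_right)
qed



lemma recip_tangent: fixes y t :: real assumes "y > 0" "t > 0"
  shows "1 / y \<ge> 2 / t - y / t^2"
proof -
  have "0 \<le> (y - t)^2" by simp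
  hence "0 \<le> (y - t)^2 / (y * t^2)" using assms by simp
  also have "(y - t)^2 / (y * t^2) = 1 / y - 2 / t + y / t^2"
    using assms by (simp add: field_simps power2_eq_square)
  finally show ?thesis by simp
qed

lemma core:
  fixes N S :: "'a set" and J :: "'b set" and u :: "'a \<Rightarrow> real" and x v :: "'b \<Rightarrow> 'a \<Rightarrow> real"
    and \<alpha> t :: real
  assumes fin: "finite N" and SN: "S \<subseteq> N" and Sne: "S \<noteq> {}" and finJ: "finite J"
    and u0: "\<forall>i\<in>N. u i \<ge> 0"
    and xb: "\<forall>j\<in>J. \<forall>i\<in>N. 0 \<le> x j i \<and> x j i \<le> 1 \<and> x j i \<le> u i"
    and xs: "\<forall>i\<in>N. (\<Sum>j\<in>J. x j i) \<le> u i"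
    and v1: "\<forall>j\<in>J. \<forall>i\<in>N. v j i \<ge> u i - x j i"
    and v2: "\<forall>j\<in>J. \<forall>i\<in>S. v j i \<ge> u i - x j i + 1"
    and opt: "\<forall>j\<in>J. (\<Sum>i\<in>N. genH (v j i)) \<le> (\<Sum>i\<in>N. genH (u i))"
    and m: "real (card J) + 1 > \<alpha>" and ap: "\<alpha> > 0" and tp: "t > 0"
    and coh: "real (card S) \<ge> t * real (card N) / \<alpha>"
    and avg: "(\<Sum>i\<in>S. u i) \<le> (t - 1) * real (card S)"
  shows False
proof -
  define D where "D j i = genH (v j i) - genH (u i)" for j i
  have finS: "finite S" using fin SN finite_subset by blast
  have "(\<Sum>j\<in>J. \<Sum>i\<in>N. D j i) \<le> 0"
  proof -
    have "(\<Sum>j\<in>J. \<Sum>i\<in>N. D j i) \<le> (\<Sum>j\<in>J. 0)"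
    proof (rule sum_mono)
      fix j assume "j \<in> J"
      thus "(\<Sum>i\<in>N. D j i) \<le> 0" using opt by (simp add: D_def sum_subtractf)
    qed
    thus ?thesis by simp
  qed
  hence tot: "(\<Sum>i\<in>N. \<Sum>j\<in>J. D j i) \<le> 0" by (simp add: sum.swap[of _ J])
  define m where "m = real (card J)"
  have inS: "(\<Sum>j\<in>J. D j i) \<ge> (m + 1) / (u i + 1) - 1" if iS: "i \<in> S" for i
  proof -
    have iN: "i \<in> N" using iS SN by auto
    have ui: "u i \<ge> 0" using u0 iN by auto
    have "(\<Sum>j\<in>J. D j i) \<ge> (\<Sum>j\<in>J. (1 - x j i) / (u i + 1))"
    proof (rule sum_mono)
      fix j assume jJ: "j \<in> J"
      have x: "0 \<le> x j i" "x j i \<le> 1" "x j i \<le> u i" using xb jJ iN by auto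
      have vv: "u i - x j i + 1 \<le> v j i" using v2 jJ iS by blast
      have "genH (u i + 1 - x j i) \<le> genH (v j i)"
        using x vv by (intro genH_mono) linarith+
      moreover have "genH (u i + 1 - x j i) - genH (u i) \<ge> (1 - x j i) / (u i + 1)"
        using genH_gain[OF ui x(1) x(2)] .
      ultimately show "(1 - x j i) / (u i + 1) \<le> D j i" by (simp add: D_def)
    qed
    also have "(\<Sum>j\<in>J. (1 - x j i) / (u i + 1)) = (m - (\<Sum>j\<in>J. x j i)) / (u i + 1)"
      by (simp add: m_def sum_divide_distrib[symmetric] sum_subtractf)
    also have "(m - (\<Sum>j\<in>J. x j i)) / (u i + 1) \<ge> (m - u i) / (u i + 1)"
      using xs iN ui by (intro divide_right_mono) auto
    also have "(m - u i) / (u i + 1) = (m + 1) / (u i + 1) - 1"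
      using ui by (simp add: field_simps)
    finally show ?thesis .
  qed
  have outS: "(\<Sum>j\<in>J. D j i) \<ge> - 1" if iN: "i \<in> N" for i
  proof -
    have ui: "u i \<ge> 0" using u0 iN by auto
    have "(\<Sum>j\<in>J. D j i) \<ge> (\<Sum>j\<in>J. - (x j i / u i))"
    proof (rule sum_mono)
      fix j assume jJ: "j \<in> J"
      have x: "0 \<le> x j i" "x j i \<le> 1" "x j i \<le> u i" using xb jJ iN by auto
      have vv: "u i - x j i \<le> v j i" using v1 jJ iN by blast
      have "genH (u i - x j i) \<le> genH (v j i)"
        using x vv by (intro genH_mono) linarith+
      moreover have "genH (u i) - genH (u i - x j i) \<le> x j i / u i"
        using genH_loss[OF x] .
      ultimately show "- (x j i / u i) \<le> D j i" by (simp add: D_def)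
    qed
    also have "(\<Sum>j\<in>J. - (x j i / u i)) = - ((\<Sum>j\<in>J. x j i) / u i)"
      by (simp add: sum_divide_distrib sum_negf)
    also have "- ((\<Sum>j\<in>J. x j i) / u i) \<ge> -1"
    proof (cases "u i = 0")
      case True thus ?thesis by simp
    next
      case False
      hence "u i > 0" using ui by simp
      thus ?thesis using xs iN by (simp add: divide_le_eq)
    qed
    finally show ?thesis .
  qed
  have "(\<Sum>i\<in>N. \<Sum>j\<in>J. D j i) = (\<Sum>i\<in>S. \<Sum>j\<in>J. D j i) + (\<Sum>i\<in>N - S. \<Sum>j\<in>J. D j i)"
    using fin SN by (metis sum.subset_diff add.commute)
  also have "\<dots> \<ge> (\<Sum>i\<in>S. (m + 1) / (u i + 1) - 1) + (\<Sum>i\<in>N - S. - 1)"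
    using inS outS by (intro add_mono sum_mono) auto
  finally have tot2: "(\<Sum>i\<in>S. (m + 1) / (u i + 1) - 1) + (\<Sum>i\<in>N - S. - 1) \<le> 0" using tot by linarith
  define s where "s = real (card S)"
  define n where "n = real (card N)"
  have cardNS: "real (card (N - S)) = n - s"
    using fin SN by (simp add: card_Diff_subset finite_subset n_def s_def of_nat_diff card_mono)
  have "(\<Sum>i\<in>S. (m + 1) / (u i + 1) - 1) = (m + 1) * (\<Sum>i\<in>S. 1 / (u i + 1)) - s"
    by (simp add: sum_subtractf sum_distrib_left s_def)
  with tot2 cardNS have key: "(m + 1) * (\<Sum>i\<in>S. 1 / (u i + 1)) \<le> n" by simp
  have "(\<Sum>i\<in>S. 1 / (u i + 1)) \<ge> (\<Sum>i\<in>S. 2 / t - (u i + 1) / t^2)"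
  proof (rule sum_mono)
    fix i assume "i \<in> S"
    hence "u i \<ge> 0" using u0 SN by auto
    thus "2 / t - (u i + 1) / t^2 \<le> 1 / (u i + 1)" using tp by (intro recip_tangent) auto
  qed
  also have "(\<Sum>i\<in>S. 2 / t - (u i + 1) / t^2) = 2 * s / t - ((\<Sum>i\<in>S. u i) + s) / t^2"
    by (simp add: sum_subtractf sum_divide_distrib[symmetric] sum.distrib s_def)
  also have "2 * s / t - ((\<Sum>i\<in>S. u i) + s) / t^2 \<ge> 2 * s / t - (t * s) / t^2"
  proof -
    have "(\<Sum>i\<in>S. u i) + s \<le> t * s" using avg by (simp add: s_def algebra_simps)
    hence "((\<Sum>i\<in>S. u i) + s) / t^2 \<le> (t * s) / t^2" using tp by (intro divide_right_mono) auto
    thus ?thesis by simp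
  qed
  also have "2 * s / t - (t * s) / t^2 = s / t" using tp by (simp add: field_simps power2_eq_square)
  finally have hm: "(\<Sum>i\<in>S. 1 / (u i + 1)) \<ge> s / t" .
  have sn: "s / t \<ge> n / \<alpha>" using coh tp ap by (simp add: s_def n_def field_simps)
  have npos: "n > 0" using Sne SN fin by (simp add: n_def card_gt_0_iff) (metis empty_iff subset_empty)
  have mp: "m + 1 > 0" by (simp add: m_def)
  have "(m + 1) * (n / \<alpha>) \<le> (m + 1) * (\<Sum>i\<in>S. 1 / (u i + 1))"
    using hm sn mp by (intro mult_left_mono) auto
  with key have "(m + 1) * (n / \<alpha>) \<le> n" by linarith
  moreover have "(m + 1) * (n / \<alpha>) > n"
  proof -
    have "(m + 1) * n > \<alpha> * n" using m npos by (simp add: m_def)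
    thus ?thesis using ap by (simp add: field_simps)
  qed
  ultimately show False by linarith
qed



definition iu :: "real set \<Rightarrow> bool" where
  "iu P \<longleftrightarrow> (\<exists>I. finite I \<and> P = (\<Union>p\<in>I. {fst p..snd p}))"

lemma iu_piece: assumes "iu P" "P \<subseteq> {0..c}" shows "is_piece c P"
proof -
  obtain I where I: "finite I" "P = (\<Union>p\<in>I. {fst p..snd p})" using assms(1) iu_def by auto
  let ?I = "{p\<in>I. fst p \<le> snd p}"
  have "finite ?I" using I by auto
  moreover have "\<forall>(a,b)\<in>?I. a \<le> b" by auto
  moreover have "P = (\<Union>(a,b)\<in>?I. {a..b})" using I by (auto simp: split_def)
  ultimately show ?thesis unfolding is_piece_def using assms(2) by blast
qed

lemma piece_iu: assumes "is_piece c P" shows "iu P" "P \<subseteq> {0..c}"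
proof -
  obtain I where I: "finite I" "P = (\<Union>(a,b)\<in>I. {a..b})" using assms is_piece_def by auto
  hence "P = (\<Union>p\<in>I. {fst p..snd p})" by (auto simp: split_def)
  thus "iu P" using I iu_def by auto
  show "P \<subseteq> {0..c}" using assms is_piece_def by auto
qed

lemma iu_empty: "iu {}"
  unfolding iu_def by (rule exI[of _ "{}"]) auto

lemma iu_Un: assumes "iu P" "iu Q" shows "iu (P \<union> Q)"
proof -
  obtain I where I: "finite I" "P = (\<Union>p\<in>I. {fst p..snd p})" using assms(1) iu_def by auto
  obtain J where J: "finite J" "Q = (\<Union>p\<in>J. {fst p..snd p})" using assms(2) iu_def by auto
  show ?thesis unfolding iu_def using I J by (intro exI[of _ "I \<union> J"]) auto
qed

lemma iu_Int_Icc: assumes "iu P" shows "iu (P \<inter> {x..y})"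
proof -
  obtain I where I: "finite I" "P = (\<Union>p\<in>I. {fst p..snd p})" using assms(1) iu_def by auto
  let ?J = "(\<lambda>p. (max (fst p) x, min (snd p) y)) ` I"
  have "P \<inter> {x..y} = (\<Union>p\<in>?J. {fst p..snd p})" using I by auto
  thus ?thesis unfolding iu_def using I by blast
qed

lemma iu_Int_atMost: assumes "iu P" shows "iu (P \<inter> {..y})"
proof -
  obtain I where I: "finite I" "P = (\<Union>p\<in>I. {fst p..snd p})" using assms(1) iu_def by auto
  let ?J = "(\<lambda>p. (fst p, min (snd p) y)) ` I"
  have "P \<inter> {..y} = (\<Union>p\<in>?J. {fst p..snd p})" using I by auto
  thus ?thesis unfolding iu_def using I by blast
qed

lemma iu_Int_atLeast: assumes "iu P" shows "iu (P \<inter> {y..})"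
proof -
  obtain I where I: "finite I" "P = (\<Union>p\<in>I. {fst p..snd p})" using assms(1) iu_def by auto
  let ?J = "(\<lambda>p. (max (fst p) y, snd p)) ` I"
  have "P \<inter> {y..} = (\<Union>p\<in>?J. {fst p..snd p})" using I by auto
  thus ?thesis unfolding iu_def using I by blast
qed

lemma iu_UN: assumes "finite F" "\<forall>x\<in>F. iu (f x)" shows "iu (\<Union>x\<in>F. f x)"
  using assms by (induction F rule: finite_induct) (auto intro: iu_Un iu_empty)

lemma iu_Int: assumes "iu P" "iu Q" shows "iu (P \<inter> Q)"
proof -
  obtain I where I: "finite I" "P = (\<Union>p\<in>I. {fst p..snd p})" using assms(1) iu_def by auto
  have "P \<inter> Q = (\<Union>p\<in>I. Q \<inter> {fst p..snd p})" using I by auto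
  moreover have "iu (\<Union>p\<in>I. Q \<inter> {fst p..snd p})"
    using I assms(2) by (intro iu_UN) (auto intro: iu_Int_Icc)
  ultimately show ?thesis by simp
qed

lemma iu_Inter: assumes "finite S" "S \<noteq> {}" "\<forall>i\<in>S. iu (f i)" shows "iu (\<Inter>i\<in>S. f i)"
  using assms by (induction S rule: finite_ne_induct) (auto intro: iu_Int)

lemma iu_Diff_Icc: assumes "iu P"
  shows "\<exists>D. iu D \<and> D \<subseteq> P \<and> P - {a..b} \<subseteq> D \<and> finite (D \<inter> {a..b})"
proof (intro exI conjI)
  let ?D = "P \<inter> {..a} \<union> P \<inter> {b..}"
  show "iu ?D" using assms by (intro iu_Un iu_Int_atMost iu_Int_atLeast)
  show "?D \<subseteq> P" by auto
  show "P - {a..b} \<subseteq> ?D" by auto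
  have "?D \<inter> {a..b} \<subseteq> {a, b}" by auto
  thus "finite (?D \<inter> {a..b})" by (rule finite_subset) auto
qed

lemma iu_Diff: assumes "iu P" "iu Q"
  shows "\<exists>D. iu D \<and> D \<subseteq> P \<and> P - Q \<subseteq> D \<and> finite (D \<inter> Q)"
proof -
  obtain I where I: "finite I" "Q = (\<Union>p\<in>I. {fst p..snd p})" using assms(2) iu_def by auto
  have "\<forall>P. iu P \<longrightarrow> (\<exists>D. iu D \<and> D \<subseteq> P \<and> P - (\<Union>p\<in>I. {fst p..snd p}) \<subseteq> D \<and> finite (D \<inter> (\<Union>p\<in>I. {fst p..snd p})))"
    using I(1)
  proof (induction I rule: finite_induct)
    case empty thus ?case by auto
  next
    case (insert q I)
    show ?case
    proof (intro allI impI)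
      fix P assume "iu P"
      then obtain D1 where D1: "iu D1" "D1 \<subseteq> P" "P - {fst q..snd q} \<subseteq> D1" "finite (D1 \<inter> {fst q..snd q})"
        using iu_Diff_Icc by blast
      then obtain D2 where D2: "iu D2" "D2 \<subseteq> D1" "D1 - (\<Union>p\<in>I. {fst p..snd p}) \<subseteq> D2"
          "finite (D2 \<inter> (\<Union>p\<in>I. {fst p..snd p}))"
        using insert.IH by blast
      have "D2 \<inter> (\<Union>p\<in>insert q I. {fst p..snd p}) \<subseteq> (D1 \<inter> {fst q..snd q}) \<union> (D2 \<inter> (\<Union>p\<in>I. {fst p..snd p}))"
        using D2(2) by auto
      hence "finite (D2 \<inter> (\<Union>p\<in>insert q I. {fst p..snd p}))"
        using D1(4) D2(4) by (rule finite_subset[OF _ finite_UnI])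
      moreover have "P - (\<Union>p\<in>insert q I. {fst p..snd p}) \<subseteq> D2" using D1(3) D2(3) by auto
      ultimately show "\<exists>D. iu D \<and> D \<subseteq> P \<and> P - (\<Union>p\<in>insert q I. {fst p..snd p}) \<subseteq> D \<and>
          finite (D \<inter> (\<Union>p\<in>insert q I. {fst p..snd p}))"
        using D2(1,2) D1(2) by blast
    qed
  qed
  thus ?thesis using assms(1) I(2) by auto
qed

lemma iu_closed: assumes "iu P" shows "closed P"
proof -
  obtain I where I: "finite I" "P = (\<Union>p\<in>I. {fst p..snd p})" using assms(1) iu_def by auto
  thus ?thesis by (auto intro!: closed_UN)
qed

lemma iu_sets: "iu P \<Longrightarrow> P \<in> sets lborel"
  using iu_closed borel_closed by simp

lemma Icc_fm: "{a..b::real} \<in> fmeasurable lborel"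
  using fmeasurable_cbox[of a b] by (simp add: cbox_interval)

lemma fm_sub: fixes E :: "real set" assumes "E \<in> sets lborel" "E \<subseteq> {0..c}" shows "E \<in> fmeasurable lborel"
proof -
  have "{0..c} \<in> fmeasurable lborel" by (rule Icc_fm)
  thus ?thesis using assms fmeasurableI2 by blast
qed

lemma meas_fin0: "finite Z \<Longrightarrow> measure lborel (Z :: real set) = 0"
  by (simp add: measure_def emeasure_lborel_countable countable_finite)

lemma meas_Un_fin:
  assumes "X \<in> fmeasurable lborel" "Y \<in> fmeasurable lborel" "finite Z" "X \<inter> Y \<subseteq> (Z :: real set)"
  shows "measure lborel (X \<union> Y) = measure lborel X + measure lborel Y"
proof -
  have "Z \<in> fmeasurable lborel" using assms(3) finite_imp_null_set_lborel fmeasurableI_null_sets by blast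
  hence "measure lborel (X \<inter> Y) \<le> measure lborel Z"
    using assms by (intro measure_mono_fmeasurable) auto
  hence "measure lborel (X \<inter> Y) = 0" using meas_fin0[OF assms(3)] by (simp add: antisym)
  thus ?thesis using measure_Un3[OF assms(1,2)] by simp
qed

lemma cut_add:
  fixes E :: "real set"
  assumes "E \<in> fmeasurable lborel" "a \<le> b"
  shows "measure lborel (E \<inter> {..b}) = measure lborel (E \<inter> {..a}) + measure lborel (E \<inter> {a..b})"
proof -
  have "E \<inter> {..b} = (E \<inter> {..a}) \<union> (E \<inter> {a..b})" using assms(2) by auto
  moreover have "measure lborel ((E \<inter> {..a}) \<union> (E \<inter> {a..b})) = measure lborel (E \<inter> {..a}) + measure lborel (E \<inter> {a..b})"
    using assms(1) by (intro meas_Un_fin[where Z="{a}"]) (auto intro: fmeasurableI2)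
  ultimately show ?thesis by simp
qed

lemma split_out:
  fixes E :: "real set"
  assumes "E \<in> fmeasurable lborel" "a \<le> b"
  shows "measure lborel (E \<inter> ({..a} \<union> {b..})) = measure lborel E - measure lborel (E \<inter> {a..b})"
proof -
  have eq: "E = (E \<inter> ({..a} \<union> {b..})) \<union> (E \<inter> {a..b})" using assms(2) by auto
  have un:  "measure lborel ((E \<inter> ({..a} \<union> {b..})) \<union> (E \<inter> {a..b})) = measure lborel (E \<inter> ({..a} \<union> {b..})) + measure lborel (E \<inter> {a..b})"
    using assms(1) by (intro meas_Un_fin[where Z="{a,b}"]) (auto intro: fmeasurableI2)
  have "measure lborel E = measure lborel ((E \<inter> ({..a} \<union> {b..})) \<union> (E \<inter> {a..b}))"
    using arg_cong[where f="measure lborel", OF eq] .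
  thus ?thesis using un by linarith
qed

lemma cut_mono:
  fixes E :: "real set"
  assumes "E \<in> fmeasurable lborel" "a \<le> b"
  shows "measure lborel (E \<inter> {..a}) \<le> measure lborel (E \<inter> {..b})"
  using cut_add[OF assms] measure_nonneg[of lborel "E \<inter> {a..b}"] by linarith

lemma cut_IVT:
  fixes E :: "real set"
  assumes "E \<in> sets lborel" "E \<subseteq> {0..c}" "c \<ge> 0" "0 \<le> y" "y \<le> measure lborel E"
  shows "\<exists>z. 0 \<le> z \<and> z \<le> c \<and> measure lborel (E \<inter> {..z}) = y"
proof -
  have fE: "E \<in> fmeasurable lborel" using fm_sub assms by blast
  define F where "F z = measure lborel (E \<inter> {..z})" for z
  have lip: "1-lipschitz_on {0..c} F"
    unfolding lipschitz_on_def
  proof (intro conjI ballI)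
    fix x y assume "x \<in> {0..c}" "y \<in> {0..c}"
    have key: "\<bar>F b - F a\<bar> \<le> b - a" if "a \<le> b" for a b
    proof -
      have "F b - F a = measure lborel (E \<inter> {a..b})" using cut_add[OF fE that] by (simp add: F_def)
      moreover have "measure lborel (E \<inter> {a..b}) \<le> measure lborel {a..b}"
        using fE by (intro measure_mono_fmeasurable Icc_fm) auto
      ultimately show ?thesis using that by simp
    qed
    show "dist (F x) (F y) \<le> 1 * dist x y"
      using key[of x y] key[of y x] by (cases "x \<le> y") (auto simp: dist_real_def abs_minus_commute)
  qed simp
  have "F 0 = 0"
  proof -
    have "E \<inter> {..0} \<subseteq> {0}" using assms(2) by auto
    hence "F 0 \<le> measure lborel {0::real}" unfolding F_def
      using fE Icc_fm[of 0 0] by (intro measure_mono_fmeasurable) auto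
    thus ?thesis using measure_nonneg[of lborel "E \<inter> {..0}"] by (simp add: F_def)
  qed
  moreover have "F c = measure lborel E"
  proof -
    have "E \<inter> {..c} = E" using assms(2) by auto
    thus ?thesis by (simp add: F_def)
  qed
  ultimately show ?thesis
    using IVT'[of F 0 y c] assms lipschitz_on_continuous_on[OF lip] by (auto simp: F_def)
qed



lemma sum_tele_nat: "(\<Sum>j\<in>{1..k}. f j - f (j - 1)) = f k - (f 0 :: real)" for k :: nat
  by (induction k) (auto simp: atLeastAtMostSuc_conv)

theorem mainTheorem19:
  fixes N :: "'a set" and G :: "'g set" and c \<alpha> t :: real
    and R :: "'a \<Rightarrow> real set \<times> 'g set" and S :: "'a set" and A :: "real set \<times> 'g set"
  assumes "finite N" and "N \<noteq> {}"
    and "finite G"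
    and "c \<ge> 0" and "max c (real (card G)) > 0"
    and "0 < \<alpha>" and "\<alpha> \<le> c + real (card G)"
    and "\<forall>i\<in>N. is_bundle c G (R i)"
    and "t \<ge> 1"
    and "cohesive N R \<alpha> t S"
    and "is_gpav c G N R \<alpha> A"
  shows "avg_sat S R A > t - 1"
proof (rule ccontr)
  note finN = assms(1) and finG = assms(3) and c0 = assms(4) and ap = assms(6)
  note bund = assms(8) and t1 = assms(9) and coh = assms(10) and gpav = assms(11)
  assume nav: "\<not> avg_sat S R A > t - 1"
  define C where "C i = fst (R i)" for i
  define Gs where "Gs i = snd (R i)" for i
  define Ac where "Ac = fst A"
  define Ag where "Ag = snd A"
  define u where "u i = util (R i) A" for i
  define Tc where "Tc = (\<Inter>i\<in>S. C i)"
  define Tg where "Tg = (\<Inter>i\<in>S. Gs i)"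
  have util_eq: "util (R i) B = measure lborel (C i \<inter> fst B) + real (card (Gs i \<inter> snd B))" for i B
    by (simp add: util_def cake_len_def C_def Gs_def)
  have pav_eq: "pav_score N R B = (\<Sum>i\<in>N. genH (util (R i) B))" for B
    by (simp add: pav_score_def)
  have SN: "S \<subseteq> N" and cardS: "real (card S) \<ge> t * real (card N) / \<alpha>"
    and bT: "measure lborel Tc + real (card Tg) \<ge> t"
    using coh by (auto simp: cohesive_def bsize_def common_bundle_def cake_len_def Tc_def Tg_def C_def Gs_def)
  have finS: "finite S" using SN finN finite_subset by blast
  have cardNpos: "card N > 0" using finN assms(2) by (simp add: card_gt_0_iff)
  have "real (card S) > 0"
  proof -
    have "t * real (card N) / \<alpha> > 0" using t1 cardNpos ap by simp
    thus ?thesis using cardS by linarith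
  qed
  hence Sne: "S \<noteq> {}" by auto
  have Apiece: "is_piece c Ac" and AgG: "Ag \<subseteq> G" and bA: "measure lborel Ac + real (card Ag) \<le> \<alpha>"
    using gpav by (auto simp: is_gpav_def is_allocation_def is_bundle_def bsize_def cake_len_def Ac_def Ag_def)
  have iuA: "iu Ac" and Acc: "Ac \<subseteq> {0..c}" using piece_iu[OF Apiece] by auto
  have finAg: "finite Ag" using AgG finG finite_subset by blast
  have iuC: "iu (C i)" and Cc: "C i \<subseteq> {0..c}" and GsG: "Gs i \<subseteq> G" if "i \<in> N" for i
    using bund that piece_iu[of c "C i"] by (auto simp: is_bundle_def C_def Gs_def)
  have fm: "X \<in> sets lborel \<Longrightarrow> X \<subseteq> {0..c} \<Longrightarrow> X \<in> fmeasurable lborel" for X using fm_sub by blast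
  have setsA: "Ac \<in> sets lborel" using iu_sets[OF iuA] .
  have setsC: "i \<in> N \<Longrightarrow> C i \<in> sets lborel" for i using iu_sets[OF iuC] by blast
  have u_eq: "u i = measure lborel (C i \<inter> Ac) + real (card (Gs i \<inter> Ag))" for i
    by (simp add: u_def util_eq Ac_def Ag_def)
  have u0: "\<forall>i\<in>N. u i \<ge> 0" by (simp add: u_eq)
  have avg: "(\<Sum>i\<in>S. u i) \<le> (t - 1) * real (card S)"
  proof -
    have "avg_sat S R A = (\<Sum>i\<in>S. u i) / real (card S)" by (simp add: avg_sat_def u_def)
    with nav have "(\<Sum>i\<in>S. u i) / real (card S) \<le> t - 1" by simp
    thus ?thesis using pos_divide_le_eq[OF \<open>real (card S) > 0\<close>] by simp
  qed
  obtain i0 where i0S: "i0 \<in> S" and ui0: "u i0 \<le> t - 1"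
  proof (rule ccontr)
    assume "\<not> thesis"
    hence "\<forall>i\<in>S. u i > t - 1" using that by force
    hence "(\<Sum>i\<in>S. t - 1) < (\<Sum>i\<in>S. u i)" using finS Sne by (intro sum_strict_mono) auto
    thus False using avg by (simp add: mult.commute)
  qed
  have i0N: "i0 \<in> N" using i0S SN by auto
  have TcC: "i \<in> S \<Longrightarrow> Tc \<subseteq> C i" for i by (auto simp: Tc_def)
  have TgG: "i \<in> S \<Longrightarrow> Tg \<subseteq> Gs i" for i by (auto simp: Tg_def)
  have iuT: "iu Tc" unfolding Tc_def using finS Sne SN iuC by (intro iu_Inter) auto
  have Tcc: "Tc \<subseteq> {0..c}" using TcC[OF i0S] Cc[OF i0N] by auto
  have TgGG: "Tg \<subseteq> G" using TgG[OF i0S] GsG[OF i0N] by auto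
  have finTg: "finite Tg" using TgGG finG finite_subset by blast
  have setsT: "Tc \<in> sets lborel" using iu_sets[OF iuT] .
  obtain Yc Yg where Y1: "iu Yc" and Y2: "Yc \<subseteq> Tc" and Y3: "finite (Yc \<inter> Ac)" and Y4: "Yg \<subseteq> Tg"
    and Y5: "Yg \<inter> Ag = {}" and Y6: "measure lborel Yc + real (card Yg) = 1"
  proof (cases "Tg - Ag = {}")
    case False
    then obtain g where "g \<in> Tg" "g \<notin> Ag" by auto
    thus ?thesis using that[of "{}" "{g}"] iu_empty by auto
  next
    case True
    hence "Tg \<inter> Ag = Tg" by auto
    have "measure lborel (Tc \<inter> Ac) \<le> measure lborel (C i0 \<inter> Ac)"
      using TcC[OF i0S] setsA setsC[OF i0N] Cc[OF i0N] setsT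
      by (intro measure_mono_fmeasurable fm sets.Int sets.Diff sets.Un) (auto simp: atMost_borel atLeast_borel atLeastAtMost_borel)
    moreover have "card (Tg \<inter> Ag) \<le> card (Gs i0 \<inter> Ag)"
      using TgG[OF i0S] finAg by (intro card_mono) auto
    ultimately have "measure lborel (Tc \<inter> Ac) + real (card Tg) \<le> u i0"
      using \<open>Tg \<inter> Ag = Tg\<close> u_eq[of i0] by simp
    hence m1: "measure lborel Tc - measure lborel (Tc \<inter> Ac) \<ge> 1" using ui0 bT by linarith
    obtain D where D: "iu D" "D \<subseteq> Tc" "Tc - Ac \<subseteq> D" "finite (D \<inter> Ac)"
      using iu_Diff[OF iuT iuA] by blast
    have "measure lborel Tc \<le> measure lborel (Tc - Ac) + measure lborel (Tc \<inter> Ac)"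
    proof -
      have "Tc = (Tc - Ac) \<union> (Tc \<inter> Ac)" by auto
      hence "measure lborel Tc = measure lborel ((Tc - Ac) \<union> (Tc \<inter> Ac))" by simp
      also have "\<dots> \<le> measure lborel (Tc - Ac) + measure lborel (Tc \<inter> Ac)"
        using setsT setsA by (intro measure_Un_le) auto
      finally show ?thesis .
    qed
    moreover have "measure lborel (Tc - Ac) \<le> measure lborel D"
      using D setsT setsA Tcc iu_sets[OF D(1)] by (intro measure_mono_fmeasurable fm sets.Int sets.Diff sets.Un) (auto simp: atMost_borel atLeast_borel atLeastAtMost_borel)
    ultimately have mD: "measure lborel D \<ge> 1" using m1 by linarith
    obtain z where z: "measure lborel (D \<inter> {..z}) = 1"
      using cut_IVT[of D c 1] iu_sets[OF D(1)] D(2) Tcc c0 mD by auto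
    show ?thesis
    proof (rule that[of "D \<inter> {..z}" "{}"])
      show "iu (D \<inter> {..z})" using D(1) by (rule iu_Int_atMost)
      show "D \<inter> {..z} \<subseteq> Tc" using D(2) by auto
      show "finite (D \<inter> {..z} \<inter> Ac)" using D(4) by (rule finite_subset[rotated]) auto
    qed (use z in auto)
  qed
  have Ycc: "Yc \<subseteq> {0..c}" using Y2 Tcc by auto
  have setsY: "Yc \<in> sets lborel" using iu_sets[OF Y1] .
  have fY: "Yc \<in> fmeasurable lborel" using fm[OF setsY Ycc] .
  have finYg: "finite Yg" using Y4 finTg finite_subset by blast
  have YgG: "Yg \<subseteq> G" using Y4 TgGG by auto
  have addY: "pav_score N R (K \<union> Yc, H \<union> Yg) \<le> pav_score N R A \<and>
     (\<forall>i\<in>N. util (R i) (K \<union> Yc, H \<union> Yg) \<ge> measure lborel (C i \<inter> K) + real (card (Gs i \<inter> H))) \<and>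
     (\<forall>i\<in>S. util (R i) (K \<union> Yc, H \<union> Yg) = measure lborel (C i \<inter> K) + real (card (Gs i \<inter> H)) + 1)"
    if K: "iu K" "K \<subseteq> Ac" and H: "H \<subseteq> Ag" and sz: "measure lborel K + real (card H) + 1 \<le> \<alpha>" for K H
  proof (intro conjI ballI)
    have Kc: "K \<subseteq> {0..c}" using K Acc by auto
    have setsK: "K \<in> sets lborel" using iu_sets[OF K(1)] .
    have finH: "finite H" using H finAg finite_subset by blast
    have "is_allocation c G \<alpha> (K \<union> Yc, H \<union> Yg)"
      unfolding is_allocation_def is_bundle_def
    proof (intro conjI)
      show "is_piece c (fst (K \<union> Yc, H \<union> Yg))" using K(1) Y1 Kc Ycc by (auto intro!: iu_piece iu_Un)
      show "snd (K \<union> Yc, H \<union> Yg) \<subseteq> G" using H AgG YgG by auto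
      have "measure lborel (K \<union> Yc) \<le> measure lborel K + measure lborel Yc"
        using setsK setsY by (intro measure_Un_le)
      moreover have "card (H \<union> Yg) \<le> card H + card Yg" by (rule card_Un_le)
      hence "real (card (H \<union> Yg)) \<le> real (card H) + real (card Yg)" by linarith
      ultimately show "bsize (K \<union> Yc, H \<union> Yg) \<le> \<alpha>" using sz Y6 by (simp add: bsize_def cake_len_def)
    qed
    thus "pav_score N R (K \<union> Yc, H \<union> Yg) \<le> pav_score N R A" using gpav by (simp add: is_gpav_def)
  next
    fix i assume iN: "i \<in> N"
    have "measure lborel (C i \<inter> K) \<le> measure lborel (C i \<inter> (K \<union> Yc))"
      using setsC[OF iN] iu_sets[OF K(1)] setsY Cc[OF iN]
      by (intro measure_mono_fmeasurable fm sets.Int sets.Diff sets.Un) (auto simp: atMost_borel atLeast_borel atLeastAtMost_borel)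
    moreover have "card (Gs i \<inter> H) \<le> card (Gs i \<inter> (H \<union> Yg))"
      using H finAg finYg by (intro card_mono) (auto intro: finite_subset)
    ultimately show "util (R i) (K \<union> Yc, H \<union> Yg) \<ge> measure lborel (C i \<inter> K) + real (card (Gs i \<inter> H))"
      by (simp add: util_eq)
  next
    fix i assume iS: "i \<in> S"
    hence iN: "i \<in> N" using SN by auto
    have e1: "C i \<inter> (K \<union> Yc) = (C i \<inter> K) \<union> Yc" using TcC[OF iS] Y2 by auto
    have "measure lborel ((C i \<inter> K) \<union> Yc) = measure lborel (C i \<inter> K) + measure lborel Yc"
      using setsC[OF iN] iu_sets[OF K(1)] Cc[OF iN] K(2) Y3 fY Ycc setsY
      by (intro meas_Un_fin[where Z="Yc \<inter> Ac"] fm sets.Int sets.Diff sets.Un) (auto simp: atMost_borel atLeast_borel atLeastAtMost_borel)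
    moreover have e2: "Gs i \<inter> (H \<union> Yg) = (Gs i \<inter> H) \<union> Yg" using TgG[OF iS] Y4 by auto
    have "card ((Gs i \<inter> H) \<union> Yg) = card (Gs i \<inter> H) + card Yg"
      using H Y5 finAg finYg by (intro card_Un_disjoint) (auto intro: finite_subset)
    ultimately show "util (R i) (K \<union> Yc, H \<union> Yg) = measure lborel (C i \<inter> K) + real (card (Gs i \<inter> H)) + 1"
      using Y6 by (simp add: util_eq e1 e2)
  qed
  show False
  proof (cases "measure lborel Ac + real (card Ag) + 1 \<le> \<alpha>")
    case True
    from addY[OF iuA subset_refl subset_refl True]
    have opt: "pav_score N R (Ac \<union> Yc, Ag \<union> Yg) \<le> pav_score N R A"
      and vN: "\<forall>i\<in>N. util (R i) (Ac \<union> Yc, Ag \<union> Yg) \<ge> u i"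
      and vS: "\<forall>i\<in>S. util (R i) (Ac \<union> Yc, Ag \<union> Yg) = u i + 1"
      by (auto simp: u_eq)
    have "0 < (\<Sum>i\<in>N. genH (util (R i) (Ac \<union> Yc, Ag \<union> Yg)) - genH (u i))"
    proof (rule sum_pos2[OF finN i0N])
      have ui: "u i0 \<ge> 0" using u0 i0N by blast
      have g1: "genH (u i0 + 1) - genH (u i0) \<ge> 1 / (u i0 + 1)"
        using genH_gain[of "u i0" 0] ui by simp
      have g2: "1 / (u i0 + 1) > 0" using ui by simp
      have "genH (u i0 + 1) - genH (u i0) > 0" using g1 g2 by linarith
      moreover have "util (R i0) (Ac \<union> Yc, Ag \<union> Yg) = u i0 + 1" using vS i0S by blast
      ultimately show "0 < genH (util (R i0) (Ac \<union> Yc, Ag \<union> Yg)) - genH (u i0)"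
        by simp
      fix i assume "i \<in> N"
      thus "0 \<le> genH (util (R i) (Ac \<union> Yc, Ag \<union> Yg)) - genH (u i)"
        using vN u0 genH_mono by fastforce
    qed
    thus False using opt by (simp add: pav_eq sum_subtractf u_def)
  next
    case False
    define L where "L = measure lborel Ac"
    define g where "g = real (card Ag)"
    define \<delta> where "\<delta> = L + g + 1 - \<alpha>"
    have dpos: "\<delta> > 0" using False by (simp add: \<delta>_def L_def g_def)
    have dle: "\<delta> \<le> 1" using bA by (simp add: \<delta>_def L_def g_def)
    define k where "k = nat \<lfloor>L / \<delta>\<rfloor>"
    have L0: "L \<ge> 0" by (simp add: L_def)
    have kle: "real k * \<delta> \<le> L"
    proof -
      have "real k \<le> L / \<delta>" using L0 dpos by (simp add: k_def)
      thus ?thesis using dpos by (simp add: pos_le_divide_eq)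
    qed
    have kgt: "real k > L - \<delta>"
    proof (cases "L \<ge> \<delta>")
      case True
      have "real k > L / \<delta> - 1" using L0 dpos by (simp add: k_def)
      moreover have "L / \<delta> - 1 - (L - \<delta>) = (1 - \<delta>) * (L - \<delta>) / \<delta>" using dpos by (simp add: field_simps)
      moreover have "(1 - \<delta>) * (L - \<delta>) / \<delta> \<ge> 0" using dle True dpos by simp
      ultimately show ?thesis by linarith
    next
      case False thus ?thesis by simp
    qed
    have fA: "Ac \<in> fmeasurable lborel" using fm[OF setsA Acc] .
    have "\<forall>j. \<exists>z. j \<le> k \<longrightarrow> 0 \<le> z \<and> z \<le> c \<and> measure lborel (Ac \<inter> {..z}) = real j * \<delta>"
    proof
      fix j
      show "\<exists>z. j \<le> k \<longrightarrow> 0 \<le> z \<and> z \<le> c \<and> measure lborel (Ac \<inter> {..z}) = real j * \<delta>"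
      proof (cases "j \<le> k")
        case True
        have "real j * \<delta> \<le> real k * \<delta>" using True dpos by (intro mult_right_mono) auto
        hence "real j * \<delta> \<le> measure lborel Ac" using kle by (simp add: L_def)
        thus ?thesis using cut_IVT[OF setsA Acc c0, of "real j * \<delta>"] dpos by auto
      qed auto
    qed
    then obtain p where p: "\<And>j. j \<le> k \<Longrightarrow> 0 \<le> p j \<and> p j \<le> c \<and> measure lborel (Ac \<inter> {..p j}) = real j * \<delta>"
      by metis
    have pmono: "p (j - 1) \<le> p j" if "1 \<le> j" "j \<le> k" for j
    proof (rule ccontr)
      assume "\<not> p (j - 1) \<le> p j"
      hence "measure lborel (Ac \<inter> {..p j}) \<le> measure lborel (Ac \<inter> {..p (j - 1)})"
        using cut_mono[OF fA] by auto
      moreover have "measure lborel (Ac \<inter> {..p j}) = real j * \<delta>" using p that by auto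
      moreover have "measure lborel (Ac \<inter> {..p (j - 1)}) = real (j - 1) * \<delta>" using p that by auto
      moreover have "real (j - 1) * \<delta> < real j * \<delta>" using that dpos by (simp add: of_nat_diff)
      ultimately show False by linarith
    qed
    have pdiff: "measure lborel (Ac \<inter> {p (j - 1)..p j}) = \<delta>" if "1 \<le> j" "j \<le> k" for j
    proof -
      have "measure lborel (Ac \<inter> {..p j}) = measure lborel (Ac \<inter> {..p (j - 1)}) + measure lborel (Ac \<inter> {p (j - 1)..p j})"
        using cut_add[OF fA pmono[OF that]] .
      moreover have "measure lborel (Ac \<inter> {..p j}) = real j * \<delta>" using p that by auto
      moreover have "measure lborel (Ac \<inter> {..p (j - 1)}) = real (j - 1) * \<delta>" using p that by auto
      ultimately show ?thesis using that by (simp add: of_nat_diff algebra_simps)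
    qed
    define J :: "(nat + 'g) set" where "J = Inl ` {1..k} \<union> Inr ` Ag"
    define Kf :: "nat + 'g \<Rightarrow> real set" where
      "Kf = case_sum (\<lambda>j. Ac \<inter> ({..p (j - 1)} \<union> {p j..})) (\<lambda>_. Ac)"
    define Hf :: "nat + 'g \<Rightarrow> 'g set" where
      "Hf = case_sum (\<lambda>_. Ag) (\<lambda>g. Ag - {g})"
    define x :: "nat + 'g \<Rightarrow> 'a \<Rightarrow> real" where
      "x = case_sum (\<lambda>j i. measure lborel (C i \<inter> Ac \<inter> {p (j - 1)..p j})) (\<lambda>g i. if g \<in> Gs i then 1 else 0)"
    define v where "v j i = util (R i) (Kf j \<union> Yc, Hf j \<union> Yg)" for j i
    have finJ: "finite J" using finAg by (simp add: J_def)
    have cardJ: "real (card J) = real k + g"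
    proof -
      have "card J = card (Inl ` {1..k} :: (nat + 'g) set) + card (Inr ` Ag :: (nat + 'g) set)"
        unfolding J_def using finAg by (intro card_Un_disjoint) auto
      also have "\<dots> = k + card Ag" by (simp add: card_image)
      finally show ?thesis by (simp add: g_def)
    qed
    have fCA: "C i \<inter> Ac \<in> fmeasurable lborel" if "i \<in> N" for i
      using setsC[OF that] setsA Acc by (intro fm sets.Int) auto
    have part: "iu (Kf j) \<and> Kf j \<subseteq> Ac \<and> Hf j \<subseteq> Ag \<and> measure lborel (Kf j) + real (card (Hf j)) + 1 \<le> \<alpha> \<and>
        (\<forall>i\<in>N. measure lborel (C i \<inter> Kf j) + real (card (Gs i \<inter> Hf j)) = u i - x j i \<and>
                0 \<le> x j i \<and> x j i \<le> 1 \<and> x j i \<le> u i)" if jJ: "j \<in> J" for j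
    proof (cases j)
      case (Inl jj)
      hence jj: "1 \<le> jj" "jj \<le> k" using jJ by (auto simp: J_def)
      have pm: "p (jj - 1) \<le> p jj" using pmono[OF jj] .
      have K: "Kf j = Ac \<inter> ({..p (jj - 1)} \<union> {p jj..})" and H: "Hf j = Ag"
        and xj: "\<And>i. x j i = measure lborel (C i \<inter> Ac \<inter> {p (jj - 1)..p jj})"
        by (simp_all add: Kf_def Hf_def x_def Inl)
      show ?thesis
      proof (intro conjI ballI)
        show "iu (Kf j)" unfolding K using iuA
          by (simp add: Int_Un_distrib iu_Un iu_Int_atMost iu_Int_atLeast)
        show "Kf j \<subseteq> Ac" "Hf j \<subseteq> Ag" using K H by auto
        have "measure lborel (Kf j) = L - \<delta>"
          unfolding K using split_out[OF fA pm] pdiff[OF jj] by (simp add: L_def)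
        thus "measure lborel (Kf j) + real (card (Hf j)) + 1 \<le> \<alpha>" using H by (simp add: \<delta>_def g_def)
      next
        fix i assume iN: "i \<in> N"
        have "measure lborel (C i \<inter> Kf j) = measure lborel (C i \<inter> Ac) - x j i"
          unfolding K xj using split_out[OF fCA[OF iN] pm] by (simp add: Int_assoc)
        thus "measure lborel (C i \<inter> Kf j) + real (card (Gs i \<inter> Hf j)) = u i - x j i"
          using H u_eq by simp
        show "0 \<le> x j i" by (simp add: xj)
        have "x j i \<le> measure lborel (Ac \<inter> {p (jj - 1)..p jj})" unfolding xj
          using setsA setsC[OF iN] Acc by (intro measure_mono_fmeasurable fm sets.Int sets.Diff sets.Un) (auto simp: atMost_borel atLeast_borel atLeastAtMost_borel)
        thus "x j i \<le> 1" using pdiff[OF jj] dle by simp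
        have "x j i \<le> measure lborel (C i \<inter> Ac)" unfolding xj
          using setsA setsC[OF iN] Acc by (intro measure_mono_fmeasurable fm sets.Int sets.Diff sets.Un) (auto simp: atMost_borel atLeast_borel atLeastAtMost_borel)
        thus "x j i \<le> u i" using u_eq by simp
      qed
    next
      case (Inr gg)
      hence gA: "gg \<in> Ag" using jJ by (auto simp: J_def)
      have K: "Kf j = Ac" and H: "Hf j = Ag - {gg}" and xj: "\<And>i. x j i = (if gg \<in> Gs i then 1 else 0)"
        by (simp_all add: Kf_def Hf_def x_def Inr)
      have cpos: "card Ag > 0" using gA finAg card_gt_0_iff by blast
      have cH: "real (card (Ag - {gg})) = g - 1"
        using card_Diff_singleton[OF gA] cpos by (simp add: g_def of_nat_diff)
      show ?thesis
      proof (intro conjI ballI)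
        show "iu (Kf j)" using iuA K by simp
        show "Kf j \<subseteq> Ac" "Hf j \<subseteq> Ag" using K H by auto
        show "measure lborel (Kf j) + real (card (Hf j)) + 1 \<le> \<alpha>"
          using K H cH bA by (simp add: g_def)
      next
        fix i assume iN: "i \<in> N"
        have "real (card (Gs i \<inter> (Ag - {gg}))) = real (card (Gs i \<inter> Ag)) - x j i"
        proof (cases "gg \<in> Gs i")
          case True
          hence e: "Gs i \<inter> (Ag - {gg}) = (Gs i \<inter> Ag) - {gg}" and gi: "gg \<in> Gs i \<inter> Ag" using gA by auto
          have cp: "card (Gs i \<inter> Ag) > 0" using gi finAg card_gt_0_iff by blast
          show ?thesis unfolding e using card_Diff_singleton[OF gi] cp True xj by (simp add: of_nat_diff)
        next
          case False
          hence "Gs i \<inter> (Ag - {gg}) = Gs i \<inter> Ag" by auto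
          thus ?thesis using False xj by simp
        qed
        thus "measure lborel (C i \<inter> Kf j) + real (card (Gs i \<inter> Hf j)) = u i - x j i"
          using K H u_eq by simp
        show "0 \<le> x j i" "x j i \<le> 1" by (simp_all add: xj)
        have "x j i \<le> real (card (Gs i \<inter> Ag))"
        proof (cases "gg \<in> Gs i")
          case True
          hence "Gs i \<inter> Ag \<noteq> {}" using gA by auto
          hence "card (Gs i \<inter> Ag) \<ge> 1" using finAg by (simp add: Suc_le_eq card_gt_0_iff)
          thus ?thesis using True xj by simp
        qed (simp add: xj)
        thus "x j i \<le> u i" using u_eq[of i] measure_nonneg[of lborel "C i \<inter> Ac"] by linarith
      qed
    qed
    have xs: "\<forall>i\<in>N. (\<Sum>j\<in>J. x j i) \<le> u i"
    proof
      fix i assume iN: "i \<in> N"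
      have "(\<Sum>j\<in>J. x j i) = (\<Sum>j\<in>Inl ` {1..k}. x j i) + (\<Sum>j\<in>Inr ` Ag. x j i)"
        unfolding J_def using finAg by (intro sum.union_disjoint) auto
      also have "(\<Sum>j\<in>Inl ` {1..k}. x j i) = (\<Sum>jj\<in>{1..k}. measure lborel (C i \<inter> Ac \<inter> {p (jj - 1)..p jj}))"
        by (simp add: sum.reindex x_def)
      also have "\<dots> = (\<Sum>jj\<in>{1..k}. measure lborel (C i \<inter> Ac \<inter> {..p jj}) - measure lborel (C i \<inter> Ac \<inter> {..p (jj - 1)}))"
        using cut_add[OF fCA[OF iN] pmono] by (intro sum.cong) auto
      also have "\<dots> = measure lborel (C i \<inter> Ac \<inter> {..p k}) - measure lborel (C i \<inter> Ac \<inter> {..p 0})"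
        by (rule sum_tele_nat)
      also have "\<dots> \<le> measure lborel (C i \<inter> Ac)"
      proof -
        have "measure lborel (C i \<inter> Ac \<inter> {..p k}) \<le> measure lborel (C i \<inter> Ac)"
          using fCA[OF iN] setsA setsC[OF iN] by (intro measure_mono_fmeasurable sets.Int) (auto simp: atMost_borel atLeast_borel atLeastAtMost_borel)
        thus ?thesis using measure_nonneg[of lborel "C i \<inter> Ac \<inter> {..p 0}"] by linarith
      qed
      also have "(\<Sum>j\<in>Inr ` Ag. x j i) = (\<Sum>gg\<in>Ag. if gg \<in> Gs i then 1 else 0)"
        by (simp add: sum.reindex x_def)
      also have "\<dots> = real (card (Gs i \<inter> Ag))"
        using finAg by (simp add: sum.If_cases Int_commute)
      finally show "(\<Sum>j\<in>J. x j i) \<le> u i" using u_eq by simp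
    qed
    show False
    proof (rule core[where N=N and S=S and J=J and u=u and x=x and v=v and \<alpha>=\<alpha> and t=t])
      show "finite N" "S \<subseteq> N" "S \<noteq> {}" "finite J" "\<forall>i\<in>N. u i \<ge> 0" "0 < \<alpha>" "t > 0"
        using finN SN Sne finJ u0 ap t1 by auto
      show "real (card S) \<ge> t * real (card N) / \<alpha>" by (rule cardS)
      show "(\<Sum>i\<in>S. u i) \<le> (t - 1) * real (card S)" by (rule avg)
      show "\<forall>i\<in>N. (\<Sum>j\<in>J. x j i) \<le> u i" by (rule xs)
      show "real (card J) + 1 > \<alpha>" using cardJ kgt by (simp add: \<delta>_def)
      show "\<forall>j\<in>J. \<forall>i\<in>N. 0 \<le> x j i \<and> x j i \<le> 1 \<and> x j i \<le> u i" using part by blast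
      show "\<forall>j\<in>J. \<forall>i\<in>N. v j i \<ge> u i - x j i"
      proof (intro ballI)
        fix j i assume "j \<in> J" "i \<in> N"
        thus "v j i \<ge> u i - x j i" using part[of j] addY[of "Kf j" "Hf j"] by (auto simp: v_def)
      qed
      show "\<forall>j\<in>J. \<forall>i\<in>S. v j i \<ge> u i - x j i + 1"
      proof (intro ballI)
        fix j i assume "j \<in> J" "i \<in> S"
        moreover hence "i \<in> N" using SN by auto
        ultimately show "v j i \<ge> u i - x j i + 1" using part[of j] addY[of "Kf j" "Hf j"] by (auto simp: v_def)
      qed
      show "\<forall>j\<in>J. (\<Sum>i\<in>N. genH (v j i)) \<le> (\<Sum>i\<in>N. genH (u i))"
      proof
        fix j assume "j \<in> J"
        thus "(\<Sum>i\<in>N. genH (v j i)) \<le> (\<Sum>i\<in>N. genH (u i))"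
          using part[of j] addY[of "Kf j" "Hf j"] by (auto simp: v_def pav_eq u_def)
      qed
    qed
  qed
qed


end
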